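(* Let $\mathcal{K}_1$ be an $\mathcal{ALCP}$ knowledge base over $(\mathcal{L}^1,N_C^1,N_R^1)$ and $\mathcal{K}_2$ one over $(\mathcal{L}^2,N_C^2,N_R^2)$, both ME-consistent. If $\mathcal{K}_1=\mathcal{K}_2$, $\mathcal{L}^1\subseteq\mathcal{L}^2$, $N_C^1\subseteq N_C^2$ and $N_R^1\subseteq N_R^2$, then for all concepts $C,D$ built over $N_C^1,N_R^1$ and all contexts $\kappa\in\mathcal{L}^1$, $\mathcal{B}_{\mathcal{K}_1}(C\sqsubseteq D\mid\kappa)=\mathcal{B}_{\mathcal{K}_2}(C\sqsubseteq D\mid\kappa)$, where each belief interval is computed with respect to the respective language.
   Context: For a propositional language $\mathcal{L}$ over a finite set $\mathrm{sig}(\mathcal{L})$ of variables, $\mathrm{Int}(\mathcal{L})$ is the set of truth assignments; $\mathcal{L}^1\subseteq\mathcal{L}^2$ means $\mathrm{sig}(\mathcal{L}^1)\subseteq\mathrm{sig}(\mathcal{L}^2)$. A probability distribution over $\mathcal{L}$ is $P:\mathrm{Int}(\mathcal{L})\to[0,1]$ summing to $1$, with $P(\phi)=\sum_{v\models\phi}P(v)$. A probabilistic constraint is $c_0+\sum_{i=1}^k c_i\,\mathsf{p}(\phi_i)\ge 0$ ($c_i\in\mathbb{R}$, $\phi_i\in\mathcal{L}$), satisfied by $P$ iff $c_0+\sum_ic_iP(\phi_i)\ge0$; $\mathrm{Mod}(\mathcal{R})$ is the set of distributions over $\mathcal{L}$ satisfying all constraints in $\mathcal{R}$; for consistent $\mathcal{R}$,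 $P^{ME}_{\mathcal{R}}$ is the unique maximizer in $\mathrm{Mod}(\mathcal{R})$ of $H(P)=-\sum_vP(v)\log P(v)$. Concepts over concept names $N_C$ and role names $N_R$: $C::=A\mid\neg C\mid C\sqcap C\mid\exists r.C$. An $\mathcal{L}$-GCI is $\langle C\sqsubseteq D:\kappa\rangle$, $\kappa\in\mathcal{L}$; an $\mathcal{L}$-TBox is a finite set of them; a KB over $(\mathcal{L},N_C,N_R)$ is $\mathcal{K}=(\mathcal{R},\mathcal{T})$ with constraints over $\mathcal{L}$ and GCIs using these symbols. A possible world $\mathcal{I}=(\Delta^{\mathcal{I}},\cdot^{\mathcal{I}},v^{\mathcal{I}})$ is a classical $\mathcal{ALC}$ interpretation of $N_C,N_R$ together with $v^{\mathcal{I}}\in\mathrm{Int}(\mathcal{L})$; it models $\langle C\sqsubseteq D:\kappa\rangle$ iff $v^{\mathcal{I}}\not\models\kappa$ or $C^{\mathcal{I}}\subseteq D^{\mathcal{I}}$. An $\mathcal{ALCP}$-interpretation $\mathcal{P}=(\mathfrak{I},P_{\mathfrak{I}})$ is a nonempty finite set of possible worlds with a probability distribution on it; $P^{\mathcal{P}}(v)=\sum_{\mathcal{I}\in\mathfrak{I},v^{\mathcal{I}}=v}P_{\mathfrak{I}}(\mathcal{I})$. $\mathcal{P}$ is an ME-$\mathcal{ALCP}$-model of $\mathcal{K}$ iff all its worlds model every GCI of $\mathcal{T}$ and $P^{\mathcal{P}}=P^{ME}_{\mathcal{R}}$; $\mathrm{Mod}_{ME}(\mathcal{K})$ is the set of these;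 $\mathcal{K}$ is ME-consistent iff it is nonempty. $\Pr_{\mathcal{P}}(C\sqsubseteq D\mid\kappa)=\big(\sum_{\mathcal{I}\in\mathfrak{I},v^{\mathcal{I}}\models\kappa,C^{\mathcal{I}}\subseteq D^{\mathcal{I}}}P_{\mathfrak{I}}(\mathcal{I})\big)/\big(\sum_{\mathcal{I}\in\mathfrak{I},v^{\mathcal{I}}\models\kappa}P_{\mathfrak{I}}(\mathcal{I})\big)$. The belief interval $\mathcal{B}_{\mathcal{K}}(C\sqsubseteq D\mid\kappa)=[\mathcal{B}^{s}_{\mathcal{K}},\mathcal{B}^{c}_{\mathcal{K}}]$ has as endpoints the infimum and supremum of $\Pr_{\mathcal{P}}(C\sqsubseteq D\mid\kappa)$ over $\mathcal{P}\in\mathrm{Mod}_{ME}(\mathcal{K})$. *)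

theory Defs
  imports Complex_Main
begin

datatype 'p pform = PTrue | PVar 'p | PNeg "'p pform" | PAnd "'p pform" "'p pform"

fun pvars :: "'p pform \<Rightarrow> 'p set" where
  "pvars PTrue = {}"
| "pvars (PVar a) = {a}"
| "pvars (PNeg f) = pvars f"
| "pvars (PAnd f g) = pvars f \<union> pvars g"

text \<open>A truth assignment over sig(L) = S is represented by the set of variables it makes true
  (a subset of S); Int(L) = Pow S.\<close>
fun psat :: "'p set \<Rightarrow> 'p pform \<Rightarrow> bool" where
  "psat v PTrue = True"
| "psat v (PVar a) = (a \<in> v)"
| "psat v (PNeg f) = (\<not> psat v f)"
| "psat v (PAnd f g) = (psat v f \<and> psat v g)"

definition is_dist :: "'p set \<Rightarrow> ('p set \<Rightarrow> real) \<Rightarrow> bool" where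
  "is_dist S P \<longleftrightarrow> (\<forall>v. 0 \<le> P v) \<and> (\<forall>v. v \<notin> Pow S \<longrightarrow> P v = 0) \<and> sum P (Pow S) = 1"

definition prob :: "'p set \<Rightarrow> ('p set \<Rightarrow> real) \<Rightarrow> 'p pform \<Rightarrow> real" where
  "prob S P f = (\<Sum>v\<in>{v\<in>Pow S. psat v f}. P v)"

text \<open>A probabilistic constraint c0 + sum_i ci p(phi_i) >= 0 is (c0, [(c1,phi1),...,(ck,phik)]).\<close>
type_synonym 'p pconstr = "real \<times> (real \<times> 'p pform) list"

definition constr_over :: "'p set \<Rightarrow> 'p pconstr \<Rightarrow> bool" where
  "constr_over S c \<longleftrightarrow> (\<forall>(ci, f) \<in> set (snd c). pvars f \<subseteq> S)"

definition sat_constr :: "'p set \<Rightarrow> ('p set \<Rightarrow> real) \<Rightarrow> 'p pconstr \<Rightarrow> bool" where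
  "sat_constr S P c \<longleftrightarrow> fst c + (\<Sum>(ci, f)\<leftarrow>snd c. ci * prob S P f) \<ge> 0"

definition Mod :: "'p set \<Rightarrow> 'p pconstr set \<Rightarrow> ('p set \<Rightarrow> real) set" where
  "Mod S R = {P. is_dist S P \<and> (\<forall>c\<in>R. sat_constr S P c)}"

definition entropy :: "'p set \<Rightarrow> ('p set \<Rightarrow> real) \<Rightarrow> real" where
  "entropy S P = - (\<Sum>v\<in>Pow S. P v * ln (P v))"

definition ME :: "'p set \<Rightarrow> 'p pconstr set \<Rightarrow> ('p set \<Rightarrow> real)" where
  "ME S R = (THE P. P \<in> Mod S R \<and> (\<forall>Q\<in>Mod S R. entropy S Q \<le> entropy S P))"

datatype ('c, 'r) concept = CName 'c | CNeg "('c, 'r) concept"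
  | CAnd "('c, 'r) concept" "('c, 'r) concept" | CEx 'r "('c, 'r) concept"

fun cnames :: "('c, 'r) concept \<Rightarrow> 'c set" where
  "cnames (CName A) = {A}"
| "cnames (CNeg C) = cnames C"
| "cnames (CAnd C D) = cnames C \<union> cnames D"
| "cnames (CEx r C) = cnames C"

fun rnames :: "('c, 'r) concept \<Rightarrow> 'r set" where
  "rnames (CName A) = {}"
| "rnames (CNeg C) = rnames C"
| "rnames (CAnd C D) = rnames C \<union> rnames D"
| "rnames (CEx r C) = {r} \<union> rnames C"

definition concept_over :: "'c set \<Rightarrow> 'r set \<Rightarrow> ('c, 'r) concept \<Rightarrow> bool" where
  "concept_over NC NR C \<longleftrightarrow> cnames C \<subseteq> NC \<and> rnames C \<subseteq> NR"

record ('c, 'r, 'd, 'p) world =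
  wdom :: "'d set"
  wcon :: "'c \<Rightarrow> 'd set"
  wrole :: "'r \<Rightarrow> ('d \<times> 'd) set"
  wval :: "'p set"

text \<open>Symbols outside the signature are interpreted canonically as empty, so that a world
  is exactly an interpretation of N_C, N_R plus an element of Int(L).\<close>
definition is_world :: "'p set \<Rightarrow> 'c set \<Rightarrow> 'r set \<Rightarrow> ('c, 'r, 'd, 'p) world \<Rightarrow> bool" where
  "is_world S NC NR w \<longleftrightarrow> wdom w \<noteq> {}
     \<and> (\<forall>A. wcon w A \<subseteq> wdom w) \<and> (\<forall>A. A \<notin> NC \<longrightarrow> wcon w A = {})
     \<and> (\<forall>r. wrole w r \<subseteq> wdom w \<times> wdom w) \<and> (\<forall>r. r \<notin> NR \<longrightarrow> wrole w r = {})
     \<and> wval w \<subseteq> S"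

fun cext :: "('c, 'r, 'd, 'p) world \<Rightarrow> ('c, 'r) concept \<Rightarrow> 'd set" where
  "cext w (CName A) = wcon w A"
| "cext w (CNeg C) = wdom w - cext w C"
| "cext w (CAnd C D) = cext w C \<inter> cext w D"
| "cext w (CEx r C) = {x \<in> wdom w. \<exists>y. (x, y) \<in> wrole w r \<and> y \<in> cext w C}"

type_synonym ('c, 'r, 'p) gci = "('c, 'r) concept \<times> ('c, 'r) concept \<times> 'p pform"

definition models_gci :: "('c, 'r, 'd, 'p) world \<Rightarrow> ('c, 'r, 'p) gci \<Rightarrow> bool" where
  "models_gci w g = (case g of (C, D, k) \<Rightarrow> \<not> psat (wval w) k \<or> cext w C \<subseteq> cext w D)"

type_synonym ('c, 'r, 'p) kb = "'p pconstr set \<times> ('c, 'r, 'p) gci set"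

definition kb_over :: "'p set \<Rightarrow> 'c set \<Rightarrow> 'r set \<Rightarrow> ('c, 'r, 'p) kb \<Rightarrow> bool" where
  "kb_over S NC NR K \<longleftrightarrow> finite (fst K) \<and> finite (snd K)
     \<and> (\<forall>c\<in>fst K. constr_over S c)
     \<and> (\<forall>(C, D, k) \<in> snd K. concept_over NC NR C \<and> concept_over NC NR D \<and> pvars k \<subseteq> S)"

definition alcp_interp :: "'p set \<Rightarrow> 'c set \<Rightarrow> 'r set
    \<Rightarrow> ('c, 'r, 'd, 'p) world set \<Rightarrow> (('c, 'r, 'd, 'p) world \<Rightarrow> real) \<Rightarrow> bool" where
  "alcp_interp S NC NR W Pw \<longleftrightarrow> finite W \<and> W \<noteq> {} \<and> (\<forall>w\<in>W. is_world S NC NR w)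
     \<and> (\<forall>w\<in>W. 0 \<le> Pw w) \<and> sum Pw W = 1"

definition induced_dist :: "('c, 'r, 'd, 'p) world set \<Rightarrow> (('c, 'r, 'd, 'p) world \<Rightarrow> real)
    \<Rightarrow> 'p set \<Rightarrow> real" where
  "induced_dist W Pw v = (\<Sum>w\<in>{w\<in>W. wval w = v}. Pw w)"

definition Mod_ME :: "'p set \<Rightarrow> 'c set \<Rightarrow> 'r set \<Rightarrow> ('c, 'r, 'p) kb
    \<Rightarrow> (('c, 'r, 'd, 'p) world set \<times> (('c, 'r, 'd, 'p) world \<Rightarrow> real)) set" where
  "Mod_ME S NC NR K = {(W, Pw). alcp_interp S NC NR W Pw
     \<and> (\<forall>w\<in>W. \<forall>g\<in>snd K. models_gci w g)
     \<and> induced_dist W Pw = ME S (fst K)}"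

definition ME_consistent :: "'d itself \<Rightarrow> 'p set \<Rightarrow> 'c set \<Rightarrow> 'r set \<Rightarrow> ('c, 'r, 'p) kb \<Rightarrow> bool" where
  "ME_consistent _ S NC NR K \<longleftrightarrow> (Mod_ME S NC NR K :: (('c, 'r, 'd, 'p) world set \<times> _) set) \<noteq> {}"

definition cond_pr :: "('c, 'r, 'd, 'p) world set \<Rightarrow> (('c, 'r, 'd, 'p) world \<Rightarrow> real)
    \<Rightarrow> ('c, 'r) concept \<Rightarrow> ('c, 'r) concept \<Rightarrow> 'p pform \<Rightarrow> real" where
  "cond_pr W Pw C D k =
     (\<Sum>w\<in>{w\<in>W. psat (wval w) k \<and> cext w C \<subseteq> cext w D}. Pw w)
     / (\<Sum>w\<in>{w\<in>W. psat (wval w) k}. Pw w)"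

definition belief_interval :: "'d itself \<Rightarrow> 'p set \<Rightarrow> 'c set \<Rightarrow> 'r set \<Rightarrow> ('c, 'r, 'p) kb
    \<Rightarrow> ('c, 'r) concept \<Rightarrow> ('c, 'r) concept \<Rightarrow> 'p pform \<Rightarrow> real \<times> real" where
  "belief_interval _ S NC NR K C D k =
     (let B = (\<lambda>(W, Pw). cond_pr W Pw C D k) `
              (Mod_ME S NC NR K :: (('c, 'r, 'd, 'p) world set \<times> _) set)
      in (Inf B, Sup B))"

end

theory Submission
  imports Defs "HOL-Analysis.Analysis" "HOL-Real_Asymp.Real_Asymp"
begin


lemma term_le:
  fixes q c :: real assumes "0 \<le> q" "0 < c"
  shows "q - c \<le> q * ln q - q * ln c"
proof (cases "q = 0")
  case True then show ?thesis using assms by simp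
next
  case False
  then have q: "0 < q" using assms by simp
  have "ln c - ln q \<le> (c - q) / q" using ln_diff_le[OF assms(2) q] .
  then have "q * (ln c - ln q) \<le> c - q" using q by (simp add: field_simps)
  then show ?thesis by (simp add: algebra_simps)
qed

lemma term_less:
  fixes q c :: real assumes "0 \<le> q" "0 < c" "q \<noteq> c"
  shows "q - c < q * ln q - q * ln c"
proof (cases "q = 0")
  case True then show ?thesis using assms by simp
next
  case False
  then have q: "0 < q" using assms by simp
  have "ln c - ln q < (c - q) / q" using ln_diff_less[OF assms(2) q] assms(3) by simp
  then have "q * (ln c - ln q) < c - q" using q by (simp add: field_simps)
  then show ?thesis by (simp add: algebra_simps)
qed

lemma xlnx_strict:
  fixes a b :: real assumes "0 \<le> a" "0 \<le> b" "a \<noteq> b"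
  shows "((a+b)/2) * ln ((a+b)/2) < (a * ln a + b * ln b)/2"
proof -
  define m where "m = (a+b)/2"
  have m: "0 < m" using assms unfolding m_def by (cases "a < b") auto
  have "a \<noteq> m" using assms unfolding m_def by (auto simp: field_simps)
  then have 1: "a - m < a * ln a - a * ln m" using term_less[OF assms(1) m] by simp
  have 2: "b - m \<le> b * ln b - b * ln m" using term_le[OF assms(2) m] .
  have h: "a + b = 2 * m" unfolding m_def by simp
  then have "(a + b) * ln m = 2 * (m * ln m)" by simp
  then have h2: "a * ln m + b * ln m = 2 * (m * ln m)" by (simp add: algebra_simps)
  have "(a - m) + (b - m) < (a * ln a - a * ln m) + (b * ln b - b * ln m)" using 1 2 by (rule add_less_le_mono)
  then have "0 < a * ln a + b * ln b - (a * ln m + b * ln m)" using h by (simp add: algebra_simps)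
  then have "m * ln m < (a * ln a + b * ln b)/2" unfolding h2 by simp
  then show ?thesis unfolding m_def .
qed

lemma xlnx_le:
  fixes a b :: real assumes "0 \<le> a" "0 \<le> b"
  shows "((a+b)/2) * ln ((a+b)/2) \<le> (a * ln a + b * ln b)/2"
  using xlnx_strict[OF assms] by (cases "a = b") auto

lemma sum_list_half:
  "(\<Sum>(ci, f)\<leftarrow>l. ci * ((a f + b f)/2)) =
     ((\<Sum>(ci, f)\<leftarrow>l. ci * a f) + (\<Sum>(ci, f)\<leftarrow>l. ci * b f)) / (2::real)"
  by (induction l) (auto simp: algebra_simps add_divide_distrib)

lemma prob_half:
  "prob S (\<lambda>v. (P v + Q v)/2) f = (prob S P f + prob S Q f)/2"
  unfolding prob_def by (simp add: sum.distrib flip: sum_divide_distrib)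

lemma Mod_convex:
  assumes "P \<in> Mod S R" "Q \<in> Mod S R" "finite S"
  shows "(\<lambda>v. (P v + Q v)/2) \<in> Mod S R"
proof -
  have "is_dist S (\<lambda>v. (P v + Q v)/2)"
    using assms unfolding Mod_def is_dist_def by (auto simp: sum.distrib sum_divide_distrib[symmetric])
  moreover have "sat_constr S (\<lambda>v. (P v + Q v)/2) c" if "c \<in> R" for c
  proof -
    have a: "sat_constr S P c" "sat_constr S Q c" using assms that unfolding Mod_def by auto
    have "(\<Sum>(ci, f)\<leftarrow>snd c. ci * prob S (\<lambda>v. (P v + Q v)/2) f)
        = ((\<Sum>(ci, f)\<leftarrow>snd c. ci * prob S P f) + (\<Sum>(ci, f)\<leftarrow>snd c. ci * prob S Q f)) / 2"
      unfolding prob_half by (rule sum_list_half)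
    then show ?thesis using a unfolding sat_constr_def by simp
  qed
  ultimately show ?thesis unfolding Mod_def by auto
qed

lemma ME_unique:
  assumes "finite S" "P \<in> Mod S R" "Q \<in> Mod S R"
    "\<forall>X\<in>Mod S R. entropy S X \<le> entropy S P" "\<forall>X\<in>Mod S R. entropy S X \<le> entropy S Q"
  shows "P = Q"
proof (rule ccontr)
  assume "P \<noteq> Q"
  then obtain v where v: "P v \<noteq> Q v" by auto
  have dP: "is_dist S P" and dQ: "is_dist S Q" using assms unfolding Mod_def by auto
  have vS: "v \<in> Pow S" using v dP dQ unfolding is_dist_def by metis
  define M where "M = (\<lambda>v. (P v + Q v)/2)"
  have M: "M \<in> Mod S R" unfolding M_def using Mod_convex assms by blast
  have "(\<Sum>v\<in>Pow S. M v * ln (M v)) < (\<Sum>v\<in>Pow S. (P v * ln (P v) + Q v * ln (Q v))/2)"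
  proof (rule sum_strict_mono_ex1)
    show "finite (Pow S)" using assms by simp
    show "\<forall>x\<in>Pow S. M x * ln (M x) \<le> (P x * ln (P x) + Q x * ln (Q x)) / 2"
    proof
      fix x assume "x \<in> Pow S"
      have "0 \<le> P x" "0 \<le> Q x" using dP dQ unfolding is_dist_def by auto
      from xlnx_le[OF this] show "M x * ln (M x) \<le> (P x * ln (P x) + Q x * ln (Q x)) / 2"
        unfolding M_def .
    qed
    show "\<exists>a\<in>Pow S. M a * ln (M a) < (P a * ln (P a) + Q a * ln (Q a)) / 2"
    proof
      have "0 \<le> P v" "0 \<le> Q v" using dP dQ unfolding is_dist_def by auto
      from xlnx_strict[OF this v] show "M v * ln (M v) < (P v * ln (P v) + Q v * ln (Q v)) / 2"
        unfolding M_def .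
    qed (fact vS)
  qed
  then have "entropy S M > (entropy S P + entropy S Q)/2"
    unfolding entropy_def by (simp add: sum.distrib sum_divide_distrib[symmetric])
  moreover have "entropy S P = entropy S Q" using assms by (meson order_antisym)
  moreover have "entropy S M \<le> entropy S P" using assms M by auto
  ultimately show False by simp
qed

lemma xlnx_cont: "continuous_on {0..1::real} (\<lambda>x. x * ln x)"
proof -
  have lim: "((\<lambda>x::real. x * ln x) \<longlongrightarrow> 0) (at_right 0)" by real_asymp
  show ?thesis
    unfolding continuous_on_eq_continuous_within
  proof
    fix x :: real assume x: "x \<in> {0..1}"
    show "continuous (at x within {0..1}) (\<lambda>x. x * ln x)"
    proof (cases "x = 0")
      case True
      have "at (0::real) within {0..1} \<le> at_right 0"
        by (metis at_within_Icc_at_right order_le_less zero_less_one)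
      then show ?thesis using True lim unfolding continuous_within by (auto intro: tendsto_mono)
    next
      case False
      then have "0 < x" using x by simp
      then have "isCont (\<lambda>x. x * ln x) x" by (auto intro!: continuous_intros)
      then show ?thesis by (rule continuous_at_imp_continuous_at_within)
    qed
  qed
qed

lemma cont_prob: "continuous_on UNIV (\<lambda>P::'p set \<Rightarrow> real. prob S P f)"
  unfolding prob_def by (intro continuous_intros continuous_on_product_coordinates)

lemma cont_constr: "continuous_on UNIV (\<lambda>P::'p set \<Rightarrow> real. (\<Sum>(ci, f)\<leftarrow>l. ci * prob S P f))"
  by (induction l) (auto intro!: continuous_intros cont_prob)

lemma ME_exists:
  fixes S :: "'p set" and R :: "'p pconstr set"
  assumes "finite S" "Mod S R \<noteq> {}"
  shows "\<exists>P\<in>Mod S R. \<forall>Q\<in>Mod S R. entropy S Q \<le> entropy S P"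
proof -
  define X where "X = (\<lambda>v::'p set. if v \<in> Pow S then {0..1::real} else {0})"
  define B where "B = PiE UNIV X"
  have "compactin euclidean (X i)" for i
    unfolding X_def by (simp add: compactin_euclidean_iff)
  then have "compactin (product_topology (\<lambda>_. euclidean) UNIV) B"
    unfolding B_def compactin_PiE by blast
  then have cB: "compact B" by (simp add: euclidean_product_topology compactin_euclidean_iff)
  have cl1: "closed {P::'p set \<Rightarrow> real. sum P (Pow S) = 1}"
    by (intro closed_Collect_eq continuous_intros continuous_on_product_coordinates)
  have cl2: "closed {P::'p set \<Rightarrow> real. sat_constr S P c}" for c
    unfolding sat_constr_def by (intro closed_Collect_le continuous_intros cont_constr)
  have cl: "closed ({P. sum P (Pow S) = 1} \<inter> (\<Inter>c\<in>R. {P. sat_constr S P c}))"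
    using cl1 cl2 by (intro closed_Int closed_INT) auto
  have eq: "Mod S R = B \<inter> ({P. sum P (Pow S) = 1} \<inter> (\<Inter>c\<in>R. {P. sat_constr S P c}))"
  proof (intro equalityI subsetI)
    fix P assume P: "P \<in> Mod S R"
    then have d: "is_dist S P" and s: "\<forall>c\<in>R. sat_constr S P c" unfolding Mod_def by auto
    have "P v \<in> X v" for v
    proof (cases "v \<in> Pow S")
      case True
      have "P v \<le> sum P (Pow S)"
        using d True assms(1) unfolding is_dist_def by (intro member_le_sum) auto
      then show ?thesis using d True unfolding is_dist_def X_def by auto
    next
      case False then show ?thesis using d unfolding is_dist_def X_def by auto
    qed
    then have "P \<in> B" unfolding B_def by (auto simp: PiE_iff)
    then show "P \<in> B \<inter> ({P. sum P (Pow S) = 1} \<inter> (\<Inter>c\<in>R. {P. sat_constr S P c}))"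
      using d s unfolding is_dist_def by auto
  next
    fix P assume P: "P \<in> B \<inter> ({P. sum P (Pow S) = 1} \<inter> (\<Inter>c\<in>R. {P. sat_constr S P c}))"
    then have Xv: "P v \<in> X v" for v unfolding B_def by (auto simp: PiE_iff)
    have "0 \<le> P v" for v using Xv[of v] by (cases "v \<in> Pow S") (auto simp: X_def)
    moreover have "P v = 0" if "v \<notin> Pow S" for v using Xv[of v] that by (auto simp: X_def)
    ultimately have "is_dist S P" using P unfolding is_dist_def by auto
    then show "P \<in> Mod S R" using P unfolding Mod_def by auto
  qed
  have cM: "compact (Mod S R)" unfolding eq using cB cl by (rule compact_Int_closed)
  have "continuous_on B (\<lambda>P. - (\<Sum>v\<in>Pow S. P v * ln (P v)))"
  proof (intro continuous_on_minus continuous_on_sum)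
    fix v assume v: "v \<in> Pow S"
    have "continuous_on B (\<lambda>P::'p set \<Rightarrow> real. P v)"
      by (rule continuous_on_subset[OF continuous_on_product_coordinates]) simp
    moreover have "(\<lambda>P. P v) ` B \<subseteq> {0..1}"
    proof
      fix y assume "y \<in> (\<lambda>P. P v) ` B"
      then obtain P where P: "P \<in> B" "y = P v" by auto
      then have "P v \<in> X v" unfolding B_def by (auto simp: PiE_iff)
      then show "y \<in> {0..1}" using v P(2) unfolding X_def by auto
    qed
    ultimately show "continuous_on B (\<lambda>P. P v * ln (P v))"
      by (rule continuous_on_compose2[OF xlnx_cont])
  qed
  then have "continuous_on (Mod S R) (entropy S)"
    unfolding entropy_def by (rule continuous_on_subset) (auto simp: eq)
  from continuous_attains_sup[OF cM assms(2) this] show ?thesis .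
qed

lemma ME_eq:
  assumes "finite S" "P \<in> Mod S R" "\<forall>Q\<in>Mod S R. entropy S Q \<le> entropy S P"
  shows "ME S R = P"
  unfolding ME_def
proof (rule the_equality)
  show "P \<in> Mod S R \<and> (\<forall>Q\<in>Mod S R. entropy S Q \<le> entropy S P)" using assms by auto
  fix Q assume "Q \<in> Mod S R \<and> (\<forall>X\<in>Mod S R. entropy S X \<le> entropy S Q)"
  then show "Q = P" using ME_unique[OF assms(1)] assms by blast
qed



definition fib :: "'p set \<Rightarrow> 'p set \<Rightarrow> 'p set \<Rightarrow> 'p set set" where
  "fib S1 S2 v = {u \<in> Pow S2. u \<inter> S1 = v}"
definition marg :: "'p set \<Rightarrow> 'p set \<Rightarrow> ('p set \<Rightarrow> real) \<Rightarrow> 'p set \<Rightarrow> real" where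
  "marg S1 S2 Q v = sum Q (fib S1 S2 v)"
definition nfib :: "'p set \<Rightarrow> 'p set \<Rightarrow> real" where
  "nfib S1 S2 = 2 ^ card (S2 - S1)"
definition lift :: "'p set \<Rightarrow> 'p set \<Rightarrow> ('p set \<Rightarrow> real) \<Rightarrow> 'p set \<Rightarrow> real" where
  "lift S1 S2 P u = (if u \<subseteq> S2 then P (u \<inter> S1) / nfib S1 S2 else 0)"

lemma nfib_pos: "0 < nfib S1 S2" unfolding nfib_def by simp

lemma finite_fib: "finite S2 \<Longrightarrow> finite (fib S1 S2 v)"
  unfolding fib_def by simp

lemma fib_empty: "v \<notin> Pow S1 \<Longrightarrow> fib S1 S2 v = {}"
  unfolding fib_def by auto

lemma sum_fib:
  assumes "finite S2" "S1 \<subseteq> S2"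
  shows "sum g (Pow S2) = (\<Sum>v\<in>Pow S1. sum g (fib S1 S2 v))"
proof -
  have "(\<Sum>v\<in>Pow S1. sum g {u \<in> Pow S2. u \<inter> S1 = v}) = sum g (Pow S2)"
    using assms by (intro sum.group) (auto intro: finite_subset)
  then show ?thesis unfolding fib_def by simp
qed

lemma card_fib:
  assumes "finite S2" "S1 \<subseteq> S2" "v \<subseteq> S1"
  shows "real (card (fib S1 S2 v)) = nfib S1 S2"
proof -
  have eq: "fib S1 S2 v = (\<lambda>x. v \<union> x) ` Pow (S2 - S1)"
  proof (intro equalityI subsetI)
    fix u assume "u \<in> fib S1 S2 v"
    then have "u \<subseteq> S2" "u \<inter> S1 = v" unfolding fib_def by auto
    then show "u \<in> (\<lambda>x. v \<union> x) ` Pow (S2 - S1)"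
      by (intro image_eqI[of _ _ "u - S1"]) auto
  next
    fix u assume "u \<in> (\<lambda>x. v \<union> x) ` Pow (S2 - S1)"
    then show "u \<in> fib S1 S2 v" using assms unfolding fib_def by auto
  qed
  have "inj_on (\<lambda>x. v \<union> x) (Pow (S2 - S1))"
    using assms unfolding inj_on_def by blast
  then have "card (fib S1 S2 v) = 2 ^ card (S2 - S1)"
    unfolding eq using assms by (simp add: card_image card_Pow)
  then show ?thesis unfolding nfib_def by simp
qed

lemma psat_restrict: "pvars f \<subseteq> S \<Longrightarrow> psat (u \<inter> S) f = psat u f"
  by (induction f) auto

lemma prob_marg:
  assumes "finite S2" "S1 \<subseteq> S2" "pvars f \<subseteq> S1"
  shows "prob S2 Q f = prob S1 (marg S1 S2 Q) f"
proof -
  have f1: "finite S1" using assms finite_subset by blast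
  have "prob S2 Q f = (\<Sum>u\<in>Pow S2. if psat u f then Q u else 0)"
    unfolding prob_def by (rule sum.inter_filter) (use assms in simp)
  also have "\<dots> = (\<Sum>v\<in>Pow S1. \<Sum>u\<in>fib S1 S2 v. if psat u f then Q u else 0)"
    using sum_fib[OF assms(1,2)] .
  also have "\<dots> = (\<Sum>v\<in>Pow S1. if psat v f then marg S1 S2 Q v else 0)"
  proof (rule sum.cong[OF refl])
    fix v assume "v \<in> Pow S1"
    have "(\<Sum>u\<in>fib S1 S2 v. if psat u f then Q u else 0) = (\<Sum>u\<in>fib S1 S2 v. if psat v f then Q u else 0)"
    proof (rule sum.cong[OF refl])
      fix u assume "u \<in> fib S1 S2 v"
      then have "u \<inter> S1 = v" unfolding fib_def by auto
      then have "psat u f = psat v f" using psat_restrict[OF assms(3), of u] by simp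
      then show "(if psat u f then Q u else 0) = (if psat v f then Q u else 0)" by simp
    qed
    then show "(\<Sum>u\<in>fib S1 S2 v. if psat u f then Q u else 0) = (if psat v f then marg S1 S2 Q v else 0)"
      unfolding marg_def by simp
  qed
  also have "\<dots> = prob S1 (marg S1 S2 Q) f"
    unfolding prob_def by (rule sum.inter_filter[symmetric]) (use f1 in simp)
  finally show ?thesis .
qed

lemma marg_lift:
  assumes "finite S2" "S1 \<subseteq> S2" "\<forall>v. v \<notin> Pow S1 \<longrightarrow> P v = 0"
  shows "marg S1 S2 (lift S1 S2 P) = P"
proof
  fix v show "marg S1 S2 (lift S1 S2 P) v = P v"
  proof (cases "v \<in> Pow S1")
    case True
    have "marg S1 S2 (lift S1 S2 P) v = (\<Sum>u\<in>fib S1 S2 v. P v / nfib S1 S2)"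
      unfolding marg_def by (rule sum.cong[OF refl]) (auto simp: fib_def lift_def)
    also have "\<dots> = P v" using card_fib[OF assms(1,2), of v] True nfib_pos[of S1 S2] by simp
    finally show ?thesis .
  next
    case False then show ?thesis using assms by (simp add: marg_def fib_empty)
  qed
qed

lemma marg_dist:
  assumes "finite S2" "S1 \<subseteq> S2" "is_dist S2 Q"
  shows "is_dist S1 (marg S1 S2 Q)"
proof -
  have "\<forall>v. 0 \<le> marg S1 S2 Q v" using assms unfolding is_dist_def marg_def by (simp add: sum_nonneg)
  moreover have "\<forall>v. v \<notin> Pow S1 \<longrightarrow> marg S1 S2 Q v = 0" unfolding marg_def by (simp add: fib_empty)
  moreover have "sum (marg S1 S2 Q) (Pow S1) = sum Q (Pow S2)"
    unfolding marg_def by (rule sum_fib[OF assms(1,2), symmetric])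
  ultimately show ?thesis using assms(3) unfolding is_dist_def by simp
qed

lemma lift_dist:
  assumes "finite S2" "S1 \<subseteq> S2" "is_dist S1 P"
  shows "is_dist S2 (lift S1 S2 P)"
proof -
  have "sum (lift S1 S2 P) (Pow S2) = sum (marg S1 S2 (lift S1 S2 P)) (Pow S1)"
    unfolding marg_def using sum_fib[OF assms(1,2)] .
  also have "\<dots> = 1" using marg_lift[OF assms(1,2)] assms(3) unfolding is_dist_def by simp
  moreover have "\<forall>v. 0 \<le> lift S1 S2 P v"
    using assms(3) nfib_pos[of S1 S2] unfolding is_dist_def lift_def by simp
  moreover have "\<forall>v. v \<notin> Pow S2 \<longrightarrow> lift S1 S2 P v = 0" unfolding lift_def by simp
  ultimately show ?thesis unfolding is_dist_def by simp
qed

lemma sat_marg: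
  assumes "finite S2" "S1 \<subseteq> S2" "constr_over S1 c"
  shows "sat_constr S2 Q c = sat_constr S1 (marg S1 S2 Q) c"
proof -
  have "(\<Sum>(ci, f)\<leftarrow>snd c. ci * prob S2 Q f) = (\<Sum>(ci, f)\<leftarrow>snd c. ci * prob S1 (marg S1 S2 Q) f)"
  proof (intro arg_cong[where f=sum_list] map_cong refl)
    fix x assume x: "x \<in> set (snd c)"
    obtain ci f where xe: "x = (ci, f)" by (cases x)
    have "pvars f \<subseteq> S1" using assms(3) x xe unfolding constr_over_def by auto
    then have "prob S2 Q f = prob S1 (marg S1 S2 Q) f" using prob_marg[OF assms(1,2)] by blast
    then show "(case x of (ci, f) \<Rightarrow> ci * prob S2 Q f) = (case x of (ci, f) \<Rightarrow> ci * prob S1 (marg S1 S2 Q) f)"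
      unfolding xe by simp
  qed
  then show ?thesis unfolding sat_constr_def by simp
qed

lemma marg_Mod:
  assumes "finite S2" "S1 \<subseteq> S2" "\<forall>c\<in>R. constr_over S1 c" "Q \<in> Mod S2 R"
  shows "marg S1 S2 Q \<in> Mod S1 R"
proof -
  have d: "is_dist S2 Q" and s: "\<forall>c\<in>R. sat_constr S2 Q c" using assms(4) unfolding Mod_def by auto
  have "sat_constr S1 (marg S1 S2 Q) c" if "c \<in> R" for c
    using sat_marg[OF assms(1,2), of c Q] assms(3) s that by simp
  then show ?thesis using marg_dist[OF assms(1,2) d] unfolding Mod_def by blast
qed

lemma lift_Mod:
  assumes "finite S2" "S1 \<subseteq> S2" "\<forall>c\<in>R. constr_over S1 c" "P \<in> Mod S1 R"
  shows "lift S1 S2 P \<in> Mod S2 R"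
proof -
  have d: "is_dist S1 P" using assms unfolding Mod_def by auto
  then have m: "marg S1 S2 (lift S1 S2 P) = P" using marg_lift[OF assms(1,2)] unfolding is_dist_def by blast
  have "sat_constr S2 (lift S1 S2 P) c" if "c \<in> R" for c
  proof -
    have "sat_constr S1 P c" using assms(4) that unfolding Mod_def by auto
    then show ?thesis using sat_marg[OF assms(1,2), of c "lift S1 S2 P"] assms(3) that m by simp
  qed
  then show ?thesis using lift_dist[OF assms(1,2) d] unfolding Mod_def by blast
qed

lemma sum_xlnx_div:
  assumes "finite S1" "is_dist S1 P" "0 < N"
  shows "(\<Sum>v\<in>Pow S1. P v * ln (P v / N)) = (\<Sum>v\<in>Pow S1. P v * ln (P v)) - ln N"
proof -
  have "(\<Sum>v\<in>Pow S1. P v * ln (P v / N)) = (\<Sum>v\<in>Pow S1. P v * ln (P v) - P v * ln N)"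
  proof (rule sum.cong[OF refl])
    fix v assume "v \<in> Pow S1"
    show "P v * ln (P v / N) = P v * ln (P v) - P v * ln N"
    proof (cases "P v = 0")
      case False
      then have "0 < P v" using assms unfolding is_dist_def by (metis order_le_less)
      then show ?thesis using assms by (simp add: ln_div algebra_simps)
    qed simp
  qed
  also have "\<dots> = (\<Sum>v\<in>Pow S1. P v * ln (P v)) - ln N"
    using assms unfolding is_dist_def by (simp add: sum_subtractf sum_distrib_right[symmetric])
  finally show ?thesis .
qed

lemma entropy_lift:
  assumes "finite S2" "S1 \<subseteq> S2" "is_dist S1 P"
  shows "entropy S2 (lift S1 S2 P) = entropy S1 P + ln (nfib S1 S2)"
proof -
  have f1: "finite S1" using assms finite_subset by blast
  have "(\<Sum>u\<in>Pow S2. lift S1 S2 P u * ln (lift S1 S2 P u))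
      = (\<Sum>v\<in>Pow S1. \<Sum>u\<in>fib S1 S2 v. lift S1 S2 P u * ln (lift S1 S2 P u))"
    using sum_fib[OF assms(1,2)] .
  also have "\<dots> = (\<Sum>v\<in>Pow S1. P v * ln (P v / nfib S1 S2))"
  proof (rule sum.cong[OF refl])
    fix v assume v: "v \<in> Pow S1"
    have "(\<Sum>u\<in>fib S1 S2 v. lift S1 S2 P u * ln (lift S1 S2 P u))
        = (\<Sum>u\<in>fib S1 S2 v. P v / nfib S1 S2 * ln (P v / nfib S1 S2))"
      by (rule sum.cong[OF refl]) (auto simp: fib_def lift_def)
    also have "\<dots> = P v * ln (P v / nfib S1 S2)"
      using card_fib[OF assms(1,2), of v] v nfib_pos[of S1 S2] by simp
    finally show "(\<Sum>u\<in>fib S1 S2 v. lift S1 S2 P u * ln (lift S1 S2 P u)) = P v * ln (P v / nfib S1 S2)" .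
  qed
  also have "\<dots> = (\<Sum>v\<in>Pow S1. P v * ln (P v)) - ln (nfib S1 S2)"
    using sum_xlnx_div[OF f1 assms(3) nfib_pos] .
  finally show ?thesis unfolding entropy_def by simp
qed

lemma gibbs_fiber:
  fixes q :: "'a \<Rightarrow> real"
  assumes "finite A" "real (card A) = N" "0 < N" "\<forall>u\<in>A. 0 \<le> q u"
  shows "sum q A * ln (sum q A / N) \<le> (\<Sum>u\<in>A. q u * ln (q u))"
proof (cases "sum q A = 0")
  case True
  then have "\<forall>u\<in>A. q u = 0" using assms sum_nonneg_eq_0_iff by blast
  then show ?thesis using True by simp
next
  case False
  then have m: "0 < sum q A" using assms by (metis order_le_less sum_nonneg)
  define c where "c = sum q A / N"
  have c: "0 < c" unfolding c_def using m assms by simp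
  have "(\<Sum>u\<in>A. q u - c) \<le> (\<Sum>u\<in>A. q u * ln (q u) - q u * ln c)"
    using term_le c assms by (intro sum_mono) auto
  then have "sum q A - N * c \<le> (\<Sum>u\<in>A. q u * ln (q u)) - sum q A * ln c"
    using assms by (simp add: sum_subtractf sum_distrib_right[symmetric])
  moreover have "N * c = sum q A" unfolding c_def using assms by simp
  ultimately show ?thesis unfolding c_def by simp
qed

lemma entropy_marg:
  assumes "finite S2" "S1 \<subseteq> S2" "is_dist S2 Q"
  shows "entropy S2 Q \<le> entropy S1 (marg S1 S2 Q) + ln (nfib S1 S2)"
proof -
  have f1: "finite S1" using assms finite_subset by blast
  have "(\<Sum>v\<in>Pow S1. marg S1 S2 Q v * ln (marg S1 S2 Q v / nfib S1 S2))
      \<le> (\<Sum>v\<in>Pow S1. \<Sum>u\<in>fib S1 S2 v. Q u * ln (Q u))"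
  proof (rule sum_mono)
    fix v assume v: "v \<in> Pow S1"
    show "marg S1 S2 Q v * ln (marg S1 S2 Q v / nfib S1 S2) \<le> (\<Sum>u\<in>fib S1 S2 v. Q u * ln (Q u))"
      unfolding marg_def using assms v card_fib[OF assms(1,2), of v] nfib_pos[of S1 S2]
      by (intro gibbs_fiber finite_fib) (auto simp: is_dist_def)
  qed
  also have "\<dots> = (\<Sum>u\<in>Pow S2. Q u * ln (Q u))" by (rule sum_fib[OF assms(1,2), symmetric])
  finally have "(\<Sum>v\<in>Pow S1. marg S1 S2 Q v * ln (marg S1 S2 Q v)) - ln (nfib S1 S2)
      \<le> (\<Sum>u\<in>Pow S2. Q u * ln (Q u))"
    using sum_xlnx_div[OF f1 marg_dist[OF assms] nfib_pos[of S1 S2]] by linarith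
  then show ?thesis unfolding entropy_def by simp
qed

lemma marg_ME:
  assumes "finite S2" "S1 \<subseteq> S2" "\<forall>c\<in>R. constr_over S1 c" "\<forall>v. v \<notin> Pow S1 \<longrightarrow> ME S1 R v = 0"
  shows "marg S1 S2 (ME S2 R) = ME S1 R"
proof (cases "Mod S1 R = {}")
  case True
  have True2: "Mod S2 R = {}"
  proof (rule ccontr)
    assume "Mod S2 R \<noteq> {}"
    then obtain Q where "Q \<in> Mod S2 R" by blast
    then have "marg S1 S2 Q \<in> Mod S1 R" by (rule marg_Mod[OF assms(1-3)])
    with True show False by simp
  qed
  have eq: "ME S2 R = ME S1 R" unfolding ME_def True True2 by simp
  show ?thesis unfolding eq
  proof
    fix v show "marg S1 S2 (ME S1 R) v = ME S1 R v"
    proof (cases "v \<in> Pow S1")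
      case True
      have vf: "v \<in> fib S1 S2 v" using True assms(2) unfolding fib_def by auto
      have "marg S1 S2 (ME S1 R) v = ME S1 R v + sum (ME S1 R) (fib S1 S2 v - {v})"
        unfolding marg_def using vf finite_fib[OF assms(1)] by (simp add: sum.remove)
      moreover have "sum (ME S1 R) (fib S1 S2 v - {v}) = 0"
      proof (rule sum.neutral, rule ballI)
        fix u assume "u \<in> fib S1 S2 v - {v}"
        then have "u \<notin> Pow S1" unfolding fib_def by auto
        then show "ME S1 R u = 0" using assms(4) by blast
      qed
      ultimately show ?thesis by simp
    next
      case False then show ?thesis using assms(4) by (simp add: marg_def fib_empty)
    qed
  qed
next
  case False
  have f1: "finite S1" by (rule finite_subset[OF assms(2,1)])
  obtain P1 where P1: "P1 \<in> Mod S1 R" "\<forall>Q\<in>Mod S1 R. entropy S1 Q \<le> entropy S1 P1"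
    using ME_exists[OF f1 False] by blast
  have E1: "ME S1 R = P1" using ME_eq[OF f1 P1] .
  have L: "lift S1 S2 P1 \<in> Mod S2 R" using lift_Mod[OF assms(1-3) P1(1)] .
  then have "Mod S2 R \<noteq> {}" by blast
  then obtain P2 where P2: "P2 \<in> Mod S2 R" "\<forall>Q\<in>Mod S2 R. entropy S2 Q \<le> entropy S2 P2"
    using ME_exists[OF assms(1)] by blast
  have E2: "ME S2 R = P2" using ME_eq[OF assms(1) P2] .
  have M: "marg S1 S2 P2 \<in> Mod S1 R" using marg_Mod[OF assms(1-3) P2(1)] .
  have d1: "is_dist S1 P1" and d2: "is_dist S2 P2" using P1(1) P2(1) unfolding Mod_def by auto
  have "entropy S1 P1 + ln (nfib S1 S2) = entropy S2 (lift S1 S2 P1)"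
    using entropy_lift[OF assms(1,2) d1] by (rule sym)
  also have "\<dots> \<le> entropy S2 P2" using P2(2) L by (rule bspec)
  also have "\<dots> \<le> entropy S1 (marg S1 S2 P2) + ln (nfib S1 S2)" using entropy_marg[OF assms(1,2) d2] .
  finally have le: "entropy S1 P1 \<le> entropy S1 (marg S1 S2 P2)" by simp
  have "\<forall>Q\<in>Mod S1 R. entropy S1 Q \<le> entropy S1 (marg S1 S2 P2)"
  proof
    fix Q assume "Q \<in> Mod S1 R"
    then have "entropy S1 Q \<le> entropy S1 P1" using P1(2) by blast
    then show "entropy S1 Q \<le> entropy S1 (marg S1 S2 P2)" using le by linarith
  qed
  then have "marg S1 S2 P2 = P1" by (rule ME_unique[OF f1 M P1(1) _ P1(2)])
  then show ?thesis unfolding E1 E2 .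
qed



definition restr :: "'p set \<Rightarrow> 'c set \<Rightarrow> 'r set \<Rightarrow> ('c,'r,'d,'p) world \<Rightarrow> ('c,'r,'d,'p) world" where
  "restr S1 NC1 NR1 w = w\<lparr>wcon := (\<lambda>A. if A \<in> NC1 then wcon w A else {}),
     wrole := (\<lambda>r. if r \<in> NR1 then wrole w r else {}), wval := wval w \<inter> S1\<rparr>"

lemma restr_simps [simp]:
  "wdom (restr S1 NC1 NR1 w) = wdom w"
  "wval (restr S1 NC1 NR1 w) = wval w \<inter> S1"
  "wcon (restr S1 NC1 NR1 w) A = (if A \<in> NC1 then wcon w A else {})"
  "wrole (restr S1 NC1 NR1 w) r = (if r \<in> NR1 then wrole w r else {})"
  unfolding restr_def by simp_all

lemma cext_restr: "concept_over NC1 NR1 C \<Longrightarrow> cext (restr S1 NC1 NR1 w) C = cext w C"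
  by (induction C) (auto simp: concept_over_def)

lemma cext_upd: "cext (w\<lparr>wval := u\<rparr>) C = cext w C"
  by (induction C) auto

lemma upd_self: "w\<lparr>wval := u\<rparr>\<lparr>wval := wval w\<rparr> = w"
  by simp

lemma world_restr: "is_world S2 NC2 NR2 w \<Longrightarrow> is_world S1 NC1 NR1 (restr S1 NC1 NR1 w)"
  unfolding is_world_def by auto

lemma world_upd: "is_world S1 NC1 NR1 w \<Longrightarrow> NC1 \<subseteq> NC2 \<Longrightarrow> NR1 \<subseteq> NR2 \<Longrightarrow> u \<subseteq> S2
   \<Longrightarrow> is_world S2 NC2 NR2 (w\<lparr>wval := u\<rparr>)"
  unfolding is_world_def by auto

lemma gci_restr:
  assumes "kb_over S1 NC1 NR1 K" "g \<in> snd K"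
  shows "models_gci (restr S1 NC1 NR1 w) g = models_gci w g"
proof -
  obtain C D k where g: "g = (C, D, k)" by (cases g)
  have "concept_over NC1 NR1 C" "concept_over NC1 NR1 D" "pvars k \<subseteq> S1"
    using assms g unfolding kb_over_def by auto
  then show ?thesis unfolding g models_gci_def by (simp add: cext_restr psat_restrict)
qed

lemma gci_upd:
  assumes "kb_over S1 NC1 NR1 K" "g \<in> snd K" "u \<inter> S1 = wval w"
  shows "models_gci (w\<lparr>wval := u\<rparr>) g = models_gci w g"
proof -
  obtain C D k where g: "g = (C, D, k)" by (cases g)
  have "pvars k \<subseteq> S1" using assms g unfolding kb_over_def by auto
  then have "psat u k = psat (wval w) k" using psat_restrict[of k S1 u] assms(3) by simp
  then show ?thesis unfolding g models_gci_def by (simp add: cext_upd)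
qed

lemma sum_push:
  assumes "finite W" "\<forall>w\<in>W. \<Phi>' (\<rho> w) = \<Phi> w"
  shows "(\<Sum>w'\<in>{w'\<in>\<rho>`W. \<Phi>' w'}. sum Pw {w\<in>W. \<rho> w = w'}) = (\<Sum>w\<in>{w\<in>W. \<Phi> w}. (Pw w :: real))"
proof -
  have e: "{w'\<in>\<rho>`W. \<Phi>' w'} = \<rho> ` {w\<in>W. \<Phi> w}"
  proof (intro equalityI subsetI)
    fix x assume "x \<in> {w'\<in>\<rho>`W. \<Phi>' w'}"
    then obtain w where "w \<in> W" "x = \<rho> w" "\<Phi>' x" by blast
    then show "x \<in> \<rho> ` {w\<in>W. \<Phi> w}" using assms(2) by blast
  next
    fix x assume "x \<in> \<rho> ` {w\<in>W. \<Phi> w}"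
    then obtain w where "w \<in> W" "x = \<rho> w" "\<Phi> w" by blast
    then show "x \<in> {w'\<in>\<rho>`W. \<Phi>' w'}" using assms(2) by blast
  qed
  have "(\<Sum>w'\<in>\<rho> ` {w\<in>W. \<Phi> w}. sum Pw {x \<in> {w\<in>W. \<Phi> w}. \<rho> x = w'}) = (\<Sum>w\<in>{w\<in>W. \<Phi> w}. Pw w)"
    using assms(1) by (intro sum.group) simp_all
  moreover have "sum Pw {w\<in>W. \<rho> w = w'} = sum Pw {x \<in> {w\<in>W. \<Phi> w}. \<rho> x = w'}"
    if w'in: "w' \<in> \<rho> ` {w\<in>W. \<Phi> w}" for w'
  proof -
    have "{w\<in>W. \<rho> w = w'} = {x \<in> {w\<in>W. \<Phi> w}. \<rho> x = w'}"
    proof (intro equalityI subsetI)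
      fix x assume x: "x \<in> {w\<in>W. \<rho> w = w'}"
      obtain w where "w \<in> W" "w' = \<rho> w" "\<Phi> w" using w'in by blast
      then show "x \<in> {x \<in> {w\<in>W. \<Phi> w}. \<rho> x = w'}" using x assms(2) by (metis (mono_tags, lifting) mem_Collect_eq)
    qed blast
    then show ?thesis by simp
  qed
  ultimately show ?thesis unfolding e by simp
qed

lemma induced_nonneg: "alcp_interp S NC NR W Pw \<Longrightarrow> 0 \<le> induced_dist W Pw v"
  unfolding alcp_interp_def induced_dist_def by (auto intro: sum_nonneg)

lemma induced_out: "alcp_interp S NC NR W Pw \<Longrightarrow> v \<notin> Pow S \<Longrightarrow> induced_dist W Pw v = 0"
  unfolding alcp_interp_def induced_dist_def is_world_def
  by (rule sum.neutral) auto

lemma BS_21: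
  fixes W :: "('c,'r,'d,'p) world set" and K :: "('c,'r,'p) kb"
  assumes fin: "finite S2" and sub: "S1 \<subseteq> S2"
    and kb1: "kb_over S1 NC1 NR1 K"
    and CD: "concept_over NC1 NR1 C" "concept_over NC1 NR1 D" "pvars k \<subseteq> S1"
    and mod: "(W, Pw) \<in> Mod_ME S2 NC2 NR2 K"
    and mg: "marg S1 S2 (ME S2 (fst K)) = ME S1 (fst K)"
  shows "cond_pr W Pw C D k \<in> (\<lambda>(W, Pw). cond_pr W Pw C D k) ` (Mod_ME S1 NC1 NR1 K :: (('c,'r,'d,'p) world set \<times> _) set)"
proof -
  have ai: "alcp_interp S2 NC2 NR2 W Pw" and tb: "\<forall>w\<in>W. \<forall>g\<in>snd K. models_gci w g"
    and ind: "induced_dist W Pw = ME S2 (fst K)" using mod unfolding Mod_ME_def by auto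
  have fW: "finite W" and neW: "W \<noteq> {}" and wW: "\<forall>w\<in>W. is_world S2 NC2 NR2 w" and nn: "\<forall>w\<in>W. 0 \<le> Pw w"
    and s1: "sum Pw W = 1" using ai unfolding alcp_interp_def by auto
  define \<rho> where "\<rho> = (restr S1 NC1 NR1 :: ('c,'r,'d,'p) world \<Rightarrow> _)"
  define W' where "W' = \<rho> ` W"
  define Pw' where "Pw' = (\<lambda>w'. sum Pw {w\<in>W. \<rho> w = w'})"
  have push: "(\<Sum>w'\<in>{w'\<in>W'. \<Phi>' w'}. Pw' w') = (\<Sum>w\<in>{w\<in>W. \<Phi> w}. Pw w)"
    if "\<forall>w\<in>W. \<Phi>' (\<rho> w) = \<Phi> w" for \<Phi>' \<Phi>
    unfolding W'_def Pw'_def using sum_push[of W \<Phi>' \<rho> \<Phi> Pw] fW that by blast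
  have "alcp_interp S1 NC1 NR1 W' Pw'"
  proof -
    have "sum Pw' W' = 1" using push[of "\<lambda>_. True" "\<lambda>_. True"] s1 by simp
    moreover have "\<forall>w'\<in>W'. is_world S1 NC1 NR1 w'" using wW world_restr unfolding W'_def \<rho>_def by blast
    moreover have "\<forall>w'\<in>W'. 0 \<le> Pw' w'" using nn unfolding Pw'_def by (auto intro: sum_nonneg)
    ultimately show ?thesis using fW neW unfolding alcp_interp_def W'_def by auto
  qed
  moreover have "\<forall>w'\<in>W'. \<forall>g\<in>snd K. models_gci w' g"
    using tb gci_restr[OF kb1] unfolding W'_def \<rho>_def by blast
  moreover have "induced_dist W' Pw' = ME S1 (fst K)"
  proof
    fix v
    have "induced_dist W' Pw' v = (\<Sum>w\<in>{w\<in>W. wval w \<inter> S1 = v}. Pw w)"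
      unfolding induced_dist_def by (rule push) (simp add: \<rho>_def)
    also have "\<dots> = (\<Sum>u\<in>fib S1 S2 v. sum Pw {w\<in>W. wval w = u})"
    proof -
      have "(\<Sum>u\<in>fib S1 S2 v. sum Pw {x \<in> {w\<in>W. wval w \<inter> S1 = v}. wval x = u}) = (\<Sum>w\<in>{w\<in>W. wval w \<inter> S1 = v}. Pw w)"
        using fW fin wW by (intro sum.group finite_fib) (auto simp: fib_def is_world_def)
      moreover have "{x \<in> {w\<in>W. wval w \<inter> S1 = v}. wval x = u} = {w\<in>W. wval w = u}" if "u \<in> fib S1 S2 v" for u
        using that unfolding fib_def by auto
      ultimately show ?thesis by simp
    qed
    also have "\<dots> = marg S1 S2 (ME S2 (fst K)) v"
      unfolding marg_def ind[symmetric] induced_dist_def ..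
    finally show "induced_dist W' Pw' v = ME S1 (fst K) v" using mg by simp
  qed
  ultimately have M: "(W', Pw') \<in> Mod_ME S1 NC1 NR1 K" unfolding Mod_ME_def by auto
  have n1: "(\<Sum>w'\<in>{w'\<in>W'. psat (wval w') k \<and> cext w' C \<subseteq> cext w' D}. Pw' w')
      = (\<Sum>w\<in>{w\<in>W. psat (wval w) k \<and> cext w C \<subseteq> cext w D}. Pw w)"
    by (rule push) (use CD in \<open>simp add: \<rho>_def cext_restr psat_restrict\<close>)
  have n2: "(\<Sum>w'\<in>{w'\<in>W'. psat (wval w') k}. Pw' w') = (\<Sum>w\<in>{w\<in>W. psat (wval w) k}. Pw w)"
    by (rule push) (use CD in \<open>simp add: \<rho>_def psat_restrict\<close>)
  have e: "cond_pr W Pw C D k = cond_pr W' Pw' C D k"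
    unfolding cond_pr_def n1 n2 ..
  show ?thesis by (rule rev_image_eqI[OF M]) (simp add: e)
qed

lemma BS_12:
  fixes W :: "('c,'r,'d,'p) world set" and K :: "('c,'r,'p) kb"
  assumes fin: "finite S2" and sub: "S1 \<subseteq> S2" "NC1 \<subseteq> NC2" "NR1 \<subseteq> NR2"
    and kb1: "kb_over S1 NC1 NR1 K" and CD: "pvars k \<subseteq> S1"
    and mod: "(W, Pw) \<in> Mod_ME S1 NC1 NR1 K"
    and mg: "marg S1 S2 (ME S2 (fst K)) = ME S1 (fst K)"
    and nn2: "\<forall>v. 0 \<le> ME S2 (fst K) v" and z2: "\<forall>v. v \<notin> Pow S2 \<longrightarrow> ME S2 (fst K) v = 0"
  shows "cond_pr W Pw C D k \<in> (\<lambda>(W, Pw). cond_pr W Pw C D k) ` (Mod_ME S2 NC2 NR2 K :: (('c,'r,'d,'p) world set \<times> _) set)"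
proof -
  define P1 where "P1 = ME S1 (fst K)"
  define P2 where "P2 = ME S2 (fst K)"
  have ai: "alcp_interp S1 NC1 NR1 W Pw" and tb: "\<forall>w\<in>W. \<forall>g\<in>snd K. models_gci w g"
    and ind: "induced_dist W Pw = P1" using mod unfolding Mod_ME_def P1_def by auto
  have fW: "finite W" and neW: "W \<noteq> {}" and wW: "\<forall>w\<in>W. is_world S1 NC1 NR1 w" and nn: "\<forall>w\<in>W. 0 \<le> Pw w"
    and s1: "sum Pw W = 1" using ai unfolding alcp_interp_def by auto
  have wv: "\<forall>w\<in>W. wval w \<subseteq> S1" using wW unfolding is_world_def by auto
  have P1nn: "0 \<le> P1 v" for v using induced_nonneg[OF ai, of v] unfolding ind .
  have Pw_le: "Pw w \<le> P1 (wval w)" if "w \<in> W" for w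
  proof -
    have "Pw w \<le> sum Pw {x\<in>W. wval x = wval w}"
      using fW nn that by (intro member_le_sum) auto
    moreover have "P1 (wval w) = induced_dist W Pw (wval w)" using ind by simp
    ultimately show ?thesis unfolding induced_dist_def by simp
  qed
  have mg': "sum P2 (fib S1 S2 v) = P1 v" for v
  proof -
    have "marg S1 S2 P2 v = P1 v" using mg unfolding P1_def P2_def by simp
    then show ?thesis unfolding marg_def .
  qed
  have P2nn: "0 \<le> P2 v" for v using nn2 unfolding P2_def by blast
  define F where "F = (\<lambda>w::('c,'r,'d,'p) world. fib S1 S2 (wval w))"
  define Q where "Q = Sigma W F"
  define \<epsilon> where "\<epsilon> = (\<lambda>(w::('c,'r,'d,'p) world, u). w\<lparr>wval := u\<rparr>)"
  define W2 where "W2 = \<epsilon> ` Q"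
  define Pw2 where "Pw2 = (\<lambda>w2::('c,'r,'d,'p) world. Pw (w2\<lparr>wval := wval w2 \<inter> S1\<rparr>) * P2 (wval w2) / P1 (wval w2 \<inter> S1))"
  have fF: "finite (F w)" for w unfolding F_def using finite_fib[OF fin] .
  have fQ: "finite Q" unfolding Q_def using fW fF by auto
  have inQ: "(w, u) \<in> Q \<longleftrightarrow> w \<in> W \<and> u \<subseteq> S2 \<and> u \<inter> S1 = wval w" for w u
    unfolding Q_def F_def fib_def by auto
  have inj: "inj_on \<epsilon> Q"
  proof (rule inj_onI)
    fix p q assume pQ: "p \<in> Q" and qQ: "q \<in> Q" and e: "\<epsilon> p = \<epsilon> q"
    obtain w u where p: "p = (w, u)" by (cases p)
    obtain w' u' where q: "q = (w', u')" by (cases q)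
    have e': "w\<lparr>wval := u\<rparr> = w'\<lparr>wval := u'\<rparr>" using e unfolding p q \<epsilon>_def by simp
    have "wval (w\<lparr>wval := u\<rparr>) = wval (w'\<lparr>wval := u'\<rparr>)" using e' by simp
    then have uu: "u = u'" by simp
    have a: "u \<inter> S1 = wval w" "u' \<inter> S1 = wval w'" using pQ qQ unfolding p q inQ by auto
    have "w = w\<lparr>wval := u\<rparr>\<lparr>wval := wval w\<rparr>" by simp
    also have "\<dots> = w'\<lparr>wval := u'\<rparr>\<lparr>wval := wval w'\<rparr>" using e' a uu by simp
    also have "\<dots> = w'" by simp
    finally show "p = q" unfolding p q using uu by simp
  qed
  have Pw2e: "Pw2 (w\<lparr>wval := u\<rparr>) = Pw w * P2 u / P1 (wval w)" if "(w, u) \<in> Q" for w u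
  proof -
    have a: "u \<inter> S1 = wval w" using that unfolding inQ by auto
    show ?thesis unfolding Pw2_def using a by simp
  qed
  have sumW2: "(\<Sum>w2\<in>{w2\<in>W2. \<Psi> w2}. Pw2 w2) =
      (\<Sum>w\<in>W. \<Sum>u\<in>{u\<in>F w. \<Psi> (w\<lparr>wval := u\<rparr>)}. Pw w * P2 u / P1 (wval w))" for \<Psi>
  proof -
    have e1: "{w2\<in>W2. \<Psi> w2} = \<epsilon> ` {p\<in>Q. \<Psi> (\<epsilon> p)}" unfolding W2_def by auto
    have "(\<Sum>w2\<in>{w2\<in>W2. \<Psi> w2}. Pw2 w2) = (\<Sum>p\<in>{p\<in>Q. \<Psi> (\<epsilon> p)}. Pw2 (\<epsilon> p))"
    proof -
      have ij: "inj_on \<epsilon> {p\<in>Q. \<Psi> (\<epsilon> p)}" by (rule inj_on_subset[OF inj]) auto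
      show ?thesis unfolding e1 using sum.reindex[OF ij, of Pw2] by (simp add: o_def)
    qed
    also have "\<dots> = (\<Sum>p\<in>{p\<in>Q. \<Psi> (\<epsilon> p)}. (\<lambda>(w, u). Pw w * P2 u / P1 (wval w)) p)"
    proof (rule sum.cong[OF refl])
      fix p assume "p \<in> {p\<in>Q. \<Psi> (\<epsilon> p)}"
      moreover obtain w u where "p = (w, u)" by (cases p)
      ultimately show "Pw2 (\<epsilon> p) = (\<lambda>(w, u). Pw w * P2 u / P1 (wval w)) p"
        using Pw2e unfolding \<epsilon>_def by auto
    qed
    also have "{p\<in>Q. \<Psi> (\<epsilon> p)} = Sigma W (\<lambda>w. {u\<in>F w. \<Psi> (w\<lparr>wval := u\<rparr>)})"
      unfolding Q_def \<epsilon>_def by auto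
    also have "(\<Sum>p\<in>Sigma W (\<lambda>w. {u\<in>F w. \<Psi> (w\<lparr>wval := u\<rparr>)}). (\<lambda>(w, u). Pw w * P2 u / P1 (wval w)) p)
        = (\<Sum>w\<in>W. \<Sum>u\<in>{u\<in>F w. \<Psi> (w\<lparr>wval := u\<rparr>)}. Pw w * P2 u / P1 (wval w))"
      by (rule sum.Sigma[symmetric]) (use fW fF in auto)
    finally show ?thesis .
  qed
  have K: "(\<Sum>u\<in>F w. Pw w * P2 u / P1 (wval w)) = Pw w" if "w \<in> W" for w
  proof -
    have "(\<Sum>u\<in>F w. Pw w * P2 u / P1 (wval w)) = Pw w * sum P2 (F w) / P1 (wval w)"
      by (simp add: sum_distrib_left sum_divide_distrib)
    also have "\<dots> = Pw w * P1 (wval w) / P1 (wval w)" unfolding F_def mg' ..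
    also have "\<dots> = Pw w"
    proof (cases "P1 (wval w) = 0")
      case True
      moreover have "0 \<le> Pw w" using nn that by blast
      ultimately have "Pw w = 0" using Pw_le[OF that] by linarith
      then show ?thesis by simp
    qed simp
    finally show ?thesis .
  qed
  have liftsum: "(\<Sum>w2\<in>{w2\<in>W2. \<Phi> (w2\<lparr>wval := wval w2 \<inter> S1\<rparr>)}. Pw2 w2) = (\<Sum>w\<in>{w\<in>W. \<Phi> w}. Pw w)" for \<Phi>
  proof -
    have "(\<Sum>w2\<in>{w2\<in>W2. \<Phi> (w2\<lparr>wval := wval w2 \<inter> S1\<rparr>)}. Pw2 w2)
       = (\<Sum>w\<in>W. \<Sum>u\<in>{u\<in>F w. \<Phi> (w\<lparr>wval := u\<rparr>\<lparr>wval := wval (w\<lparr>wval := u\<rparr>) \<inter> S1\<rparr>)}. Pw w * P2 u / P1 (wval w))"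
      by (rule sumW2)
    also have "\<dots> = (\<Sum>w\<in>W. if \<Phi> w then Pw w else 0)"
    proof (rule sum.cong[OF refl])
      fix w assume w: "w \<in> W"
      have "{u\<in>F w. \<Phi> (w\<lparr>wval := u\<rparr>\<lparr>wval := wval (w\<lparr>wval := u\<rparr>) \<inter> S1\<rparr>)} = (if \<Phi> w then F w else {})"
      proof -
        have "w\<lparr>wval := u\<rparr>\<lparr>wval := wval (w\<lparr>wval := u\<rparr>) \<inter> S1\<rparr> = w" if "u \<in> F w" for u
        proof -
          have "u \<inter> S1 = wval w" using that unfolding F_def fib_def by auto
          then show ?thesis by simp
        qed
        then show ?thesis by (cases "\<Phi> w") auto
      qed
      then show "(\<Sum>u\<in>{u\<in>F w. \<Phi> (w\<lparr>wval := u\<rparr>\<lparr>wval := wval (w\<lparr>wval := u\<rparr>) \<inter> S1\<rparr>)}. Pw w * P2 u / P1 (wval w))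
          = (if \<Phi> w then Pw w else 0)" using K[OF w] by simp
    qed
    also have "\<dots> = (\<Sum>w\<in>{w\<in>W. \<Phi> w}. Pw w)" using fW by (simp add: sum.inter_filter)
    finally show ?thesis .
  qed
  have "alcp_interp S2 NC2 NR2 W2 Pw2"
  proof -
    obtain w0 where w0: "w0 \<in> W" using neW by blast
    have "(w0, wval w0) \<in> Q" unfolding inQ using w0 wv sub by auto
    then have "W2 \<noteq> {}" unfolding W2_def by auto
    moreover have "finite W2" unfolding W2_def using fQ by simp
    moreover have "\<forall>w2\<in>W2. is_world S2 NC2 NR2 w2"
    proof
      fix w2 assume "w2 \<in> W2"
      then obtain w u where "(w, u) \<in> Q" "w2 = w\<lparr>wval := u\<rparr>" unfolding W2_def \<epsilon>_def by auto
      then show "is_world S2 NC2 NR2 w2" using wW world_upd[OF _ sub(2,3)] unfolding inQ by blast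
    qed
    moreover have "\<forall>w2\<in>W2. 0 \<le> Pw2 w2"
    proof
      fix w2 assume "w2 \<in> W2"
      then obtain w u where wu: "(w, u) \<in> Q" "w2 = w\<lparr>wval := u\<rparr>" unfolding W2_def \<epsilon>_def by auto
      have "0 \<le> Pw w" using nn wu unfolding inQ by auto
      then show "0 \<le> Pw2 w2" unfolding wu(2) Pw2e[OF wu(1)] using P2nn P1nn by simp
    qed
    moreover have "sum Pw2 W2 = 1" using liftsum[of "\<lambda>_. True"] s1 by simp
    ultimately show ?thesis unfolding alcp_interp_def by auto
  qed
  moreover have "\<forall>w2\<in>W2. \<forall>g\<in>snd K. models_gci w2 g"
  proof (intro ballI)
    fix w2 g assume "w2 \<in> W2" "g \<in> snd K"
    moreover obtain w u where wu: "(w, u) \<in> Q" "w2 = w\<lparr>wval := u\<rparr>" using \<open>w2 \<in> W2\<close> unfolding W2_def \<epsilon>_def by auto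
    ultimately show "models_gci w2 g" using gci_upd[OF kb1 \<open>g \<in> snd K\<close>, of u w] tb unfolding inQ by auto
  qed
  moreover have "induced_dist W2 Pw2 = P2"
  proof
    fix x
    have "induced_dist W2 Pw2 x = (\<Sum>w\<in>W. \<Sum>u\<in>{u\<in>F w. wval (w\<lparr>wval := u\<rparr>) = x}. Pw w * P2 u / P1 (wval w))"
      unfolding induced_dist_def by (rule sumW2)
    also have "\<dots> = (\<Sum>w\<in>W. if x \<in> F w then Pw w * P2 x / P1 (wval w) else 0)"
    proof (rule sum.cong[OF refl])
      fix w assume "w \<in> W"
      have "{u\<in>F w. wval (w\<lparr>wval := u\<rparr>) = x} = (if x \<in> F w then {x} else {})" by auto
      then show "(\<Sum>u\<in>{u\<in>F w. wval (w\<lparr>wval := u\<rparr>) = x}. Pw w * P2 u / P1 (wval w)) =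
          (if x \<in> F w then Pw w * P2 x / P1 (wval w) else 0)" by simp
    qed
    also have "\<dots> = P2 x"
    proof (cases "x \<subseteq> S2")
      case False
      then have "x \<notin> F w" for w unfolding F_def fib_def by auto
      then show ?thesis using False z2 unfolding P2_def by simp
    next
      case True
      have "(\<Sum>w\<in>W. if x \<in> F w then Pw w * P2 x / P1 (wval w) else 0)
          = (\<Sum>w\<in>W. if wval w = x \<inter> S1 then Pw w * (P2 x / P1 (x \<inter> S1)) else 0)"
        by (rule sum.cong[OF refl]) (use True in \<open>auto simp: F_def fib_def\<close>)
      also have "\<dots> = (\<Sum>w\<in>{w\<in>W. wval w = x \<inter> S1}. Pw w) * (P2 x / P1 (x \<inter> S1))"
        unfolding sum_distrib_right by (rule sum.inter_filter[OF fW, symmetric])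
      also have "\<dots> = P1 (x \<inter> S1) * (P2 x / P1 (x \<inter> S1))"
      proof -
        have "P1 (x \<inter> S1) = induced_dist W Pw (x \<inter> S1)" using ind by simp
        then show ?thesis unfolding induced_dist_def by simp
      qed
      also have "\<dots> = P2 x"
      proof (cases "P1 (x \<inter> S1) = 0")
        case z: True
        have "x \<in> fib S1 S2 (x \<inter> S1)" using True unfolding fib_def by auto
        then have "P2 x \<le> sum P2 (fib S1 S2 (x \<inter> S1))"
          using P2nn finite_fib[OF fin] by (intro member_le_sum) auto
        then have "P2 x = 0" using z mg'[of "x \<inter> S1"] P2nn[of x] by linarith
        then show ?thesis using z by simp
      qed simp
      finally show ?thesis .
    qed
    finally show "induced_dist W2 Pw2 x = P2 x" .
  qed
  ultimately have M: "(W2, Pw2) \<in> Mod_ME S2 NC2 NR2 K" unfolding Mod_ME_def P2_def by auto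
  have c1: "{w2\<in>W2. psat (wval w2) k \<and> cext w2 C \<subseteq> cext w2 D}
      = {w2\<in>W2. (\<lambda>w. psat (wval w) k \<and> cext w C \<subseteq> cext w D) (w2\<lparr>wval := wval w2 \<inter> S1\<rparr>)}"
    using CD by (simp add: cext_upd psat_restrict)
  have c2: "{w2\<in>W2. psat (wval w2) k} = {w2\<in>W2. (\<lambda>w. psat (wval w) k) (w2\<lparr>wval := wval w2 \<inter> S1\<rparr>)}"
    using CD by (simp add: psat_restrict)
  have l1: "sum Pw2 {w2\<in>W2. psat (wval w2) k \<and> cext w2 C \<subseteq> cext w2 D} = sum Pw {w\<in>W. psat (wval w) k \<and> cext w C \<subseteq> cext w D}"
    unfolding c1 using liftsum[of "\<lambda>w. psat (wval w) k \<and> cext w C \<subseteq> cext w D"] by simp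
  have l2: "sum Pw2 {w2\<in>W2. psat (wval w2) k} = sum Pw {w\<in>W. psat (wval w) k}"
    unfolding c2 using liftsum[of "\<lambda>w. psat (wval w) k"] by simp
  have e: "cond_pr W Pw C D k = cond_pr W2 Pw2 C D k"
    unfolding cond_pr_def l1 l2 ..
  show ?thesis by (rule rev_image_eqI[OF M]) (simp add: e)
qed

theorem theorem7:
  fixes S1 S2 :: "'p set" and NC1 NC2 :: "'c set" and NR1 NR2 :: "'r set"
    and K :: "('c, 'r, 'p) kb" and C D :: "('c, 'r) concept" and k :: "'p pform"
  assumes "finite S1" and "finite S2"
    and "kb_over S1 NC1 NR1 K" and "kb_over S2 NC2 NR2 K"
    and "ME_consistent TYPE('d) S1 NC1 NR1 K" and "ME_consistent TYPE('d) S2 NC2 NR2 K"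
    and "S1 \<subseteq> S2" and "NC1 \<subseteq> NC2" and "NR1 \<subseteq> NR2"
    and "concept_over NC1 NR1 C" and "concept_over NC1 NR1 D" and "pvars k \<subseteq> S1"
  shows "belief_interval TYPE('d) S1 NC1 NR1 K C D k = belief_interval TYPE('d) S2 NC2 NR2 K C D k"
proof -
  obtain W1 Pw1 where m1: "(W1, Pw1) \<in> (Mod_ME S1 NC1 NR1 K :: (('c,'r,'d,'p) world set \<times> _) set)"
    using assms(5) unfolding ME_consistent_def by fast
  obtain W2 Pw2 where m2: "(W2, Pw2) \<in> (Mod_ME S2 NC2 NR2 K :: (('c,'r,'d,'p) world set \<times> _) set)"
    using assms(6) unfolding ME_consistent_def by fast
  have ai1: "alcp_interp S1 NC1 NR1 W1 Pw1" and ind1: "induced_dist W1 Pw1 = ME S1 (fst K)"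
    using m1 unfolding Mod_ME_def by auto
  have ai2: "alcp_interp S2 NC2 NR2 W2 Pw2" and ind2: "induced_dist W2 Pw2 = ME S2 (fst K)"
    using m2 unfolding Mod_ME_def by auto
  have z1: "\<forall>v. v \<notin> Pow S1 \<longrightarrow> ME S1 (fst K) v = 0"
  proof (intro allI impI)
    fix v assume "v \<notin> Pow S1"
    from induced_out[OF ai1 this] show "ME S1 (fst K) v = 0" unfolding ind1 .
  qed
  have z2: "\<forall>v. v \<notin> Pow S2 \<longrightarrow> ME S2 (fst K) v = 0"
  proof (intro allI impI)
    fix v assume "v \<notin> Pow S2"
    from induced_out[OF ai2 this] show "ME S2 (fst K) v = 0" unfolding ind2 .
  qed
  have nn2: "\<forall>v. 0 \<le> ME S2 (fst K) v"
  proof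
    fix v from induced_nonneg[OF ai2, of v] show "0 \<le> ME S2 (fst K) v" unfolding ind2 .
  qed
  have cR: "\<forall>c\<in>fst K. constr_over S1 c" using assms(3) unfolding kb_over_def by auto
  have mg: "marg S1 S2 (ME S2 (fst K)) = ME S1 (fst K)"
    by (rule marg_ME[OF assms(2) assms(7) cR z1])
  have eq: "(\<lambda>(W, Pw). cond_pr W Pw C D k) ` (Mod_ME S1 NC1 NR1 K :: (('c,'r,'d,'p) world set \<times> _) set)
      = (\<lambda>(W, Pw). cond_pr W Pw C D k) ` (Mod_ME S2 NC2 NR2 K :: (('c,'r,'d,'p) world set \<times> _) set)"
  proof (intro equalityI subsetI)
    fix x assume "x \<in> (\<lambda>(W, Pw). cond_pr W Pw C D k) ` (Mod_ME S1 NC1 NR1 K :: (('c,'r,'d,'p) world set \<times> _) set)"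
    then obtain W Pw where wp: "(W, Pw) \<in> (Mod_ME S1 NC1 NR1 K :: (('c,'r,'d,'p) world set \<times> _) set)"
      and x: "x = cond_pr W Pw C D k" by auto
    show "x \<in> (\<lambda>(W, Pw). cond_pr W Pw C D k) ` (Mod_ME S2 NC2 NR2 K :: (('c,'r,'d,'p) world set \<times> _) set)"
      unfolding x by (rule BS_12[OF assms(2) assms(7-9) assms(3) assms(12) wp mg nn2 z2])
  next
    fix x assume "x \<in> (\<lambda>(W, Pw). cond_pr W Pw C D k) ` (Mod_ME S2 NC2 NR2 K :: (('c,'r,'d,'p) world set \<times> _) set)"
    then obtain W Pw where wp: "(W, Pw) \<in> (Mod_ME S2 NC2 NR2 K :: (('c,'r,'d,'p) world set \<times> _) set)"
      and x: "x = cond_pr W Pw C D k" by auto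
    show "x \<in> (\<lambda>(W, Pw). cond_pr W Pw C D k) ` (Mod_ME S1 NC1 NR1 K :: (('c,'r,'d,'p) world set \<times> _) set)"
      unfolding x by (rule BS_21[OF assms(2) assms(7) assms(3) assms(10-12) wp mg])
  qed
  show ?thesis unfolding belief_interval_def Let_def eq ..
qed


end
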